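(* Let $b,n\geq 2$ be integers, let $a=\frac{b^n-1}{b-1}$, let $d\in\mathbb{P}$ with $\gcd(a,d)=1$, and let $$A=\left(a,\ ba+d,\ b^2a+\tfrac{b^2-1}{b-1}d,\ \dots,\ b^{n-1}a+\tfrac{b^{n-1}-1}{b-1}d\right).$$ Then the type of $\langle A\rangle$ is $t(A)=n-1$, and $$PF(A)=\{F(A),\ F(A)-d,\ \dots,\ F(A)-(n-2)d\}.$$
   Context: $\mathbb{P}$ denotes the positive integers. $\langle A\rangle$ is the numerical semigroup of all nonnegative integer combinations of entries of $A$; $F(A)$ is the largest integer not in $\langle A\rangle$. An integer $u\notin\langle A\rangle$ is a pseudo-Frobenius number if $u+s\in\langle A\rangle$ for all $s\in\langle A\rangle\setminus\{0\}$; $PF(A)$ is the set of pseudo-Frobenius numbers and the type $t(A)$ is its cardinality. *)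

theory Defs
  imports Main
begin

definition semigroup_gen :: "nat list \<Rightarrow> int set" where
  "semigroup_gen A = {int (\<Sum>i<length A. c i * A ! i) | c :: nat \<Rightarrow> nat. True}"

definition frobenius :: "nat list \<Rightarrow> int" where
  "frobenius A = (GREATEST x. x \<notin> semigroup_gen A)"

definition pseudo_frobenius :: "nat list \<Rightarrow> int set" where
  "pseudo_frobenius A = {u. u \<notin> semigroup_gen A \<and>
      (\<forall>s \<in> semigroup_gen A - {0}. u + s \<in> semigroup_gen A)}"

definition sg_type :: "nat list \<Rightarrow> nat" where
  "sg_type A = card (pseudo_frobenius A)"

end

theory Submission
  imports Defs "HOL-Number_Theory.Cong"
begin

locale th =
  fixes b n d :: nat
  assumes b2: "b \<ge> 2" and n2: "n \<ge> 2" and dpos: "d > 0"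
    and cop: "gcd ((b ^ n - 1) div (b - 1)) d = 1"
begin

definition R :: "nat \<Rightarrow> nat" where "R i = (b ^ i - 1) div (b - 1)"
definition a :: nat where "a = R n"
definition g :: nat where "g = b ^ n - 1 + d"
definition G :: "nat \<Rightarrow> nat" where "G i = b ^ i * a + R i * d"
definition V :: "(nat \<Rightarrow> nat) \<Rightarrow> nat" where "V c = (\<Sum>i<n. c i * G i)"
definition S :: "int set" where "S = {int (V c) | c. True}"

lemma bpos: "b ^ i \<ge> 1" using b2 by simp

lemma R_dvd: "(b - 1) dvd (b ^ i - 1)"
proof (induction i)
  case 0 then show ?case by simp
next
  case (Suc i)
  have "b ^ Suc i - 1 = b * (b ^ i - 1) + (b - 1)" using bpos[of i] b2
    by (simp add: algebra_simps right_diff_distrib')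
  then show ?case using Suc by simp
qed

lemma R_eq: "(b - 1) * R i = b ^ i - 1"
  unfolding R_def using R_dvd by simp

lemma bpow_R: "b ^ i = (b - 1) * R i + 1"
  using R_eq[of i] bpos[of i] by simp

lemma R_0[simp]: "R 0 = 0" unfolding R_def by simp
lemma R_1[simp]: "R 1 = 1" unfolding R_def using b2 by simp

lemma R_Suc: "R (Suc i) = b * R i + 1"
proof -
  have "(b - 1) * R (Suc i) = (b - 1) * (b * R i + 1)"
    using R_eq[of "Suc i"] R_eq[of i] bpos[of i] b2
    by (simp add: algebra_simps right_diff_distrib' diff_mult_distrib2)
  then show ?thesis using b2 by (subst (asm) mult_left_cancel) auto
qed

lemma a_eq: "(b - 1) * a = b ^ n - 1" unfolding a_def by (rule R_eq)

lemma G_eq: "G i = g * R i + a"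
proof -
  have "G i = ((b - 1) * R i + 1) * a + R i * d" unfolding G_def using bpow_R[of i] by simp
  also have "\<dots> = R i * ((b - 1) * a + d) + a" by (simp add: algebra_simps)
  also have "\<dots> = g * R i + a" unfolding g_def a_eq by (simp add: mult.commute)
  finally show ?thesis .
qed

lemma G_int: "int (b - 1) * int (G i) = int g * int b ^ i - int d"
proof -
  have "int (b - 1) * int (G i) = int ((b-1) * G i)" by simp
  also have "(b-1) * G i = b ^ i * ((b-1) * a) + ((b-1) * R i) * d" unfolding G_def
    by (simp add: algebra_simps)
  also have "\<dots> = b ^ i * (b ^ n - 1) + (b ^ i - 1) * d" by (simp only: a_eq R_eq)
  finally have "int (b - 1) * int (G i) = int (b ^ i * (b ^ n - 1) + (b ^ i - 1) * d)" .
  also have "\<dots> = int b ^ i * (int b ^ n - 1) + (int b ^ i - 1) * int d"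
    using bpos[of i] bpos[of n] by (simp add: of_nat_diff)
  also have "\<dots> = int g * int b ^ i - int d" unfolding g_def using bpos[of n]
    by (simp add: of_nat_diff algebra_simps)
  finally show ?thesis .
qed

lemma a_pos: "a \<ge> 1"
proof -
  have "b ^ n \<ge> b" using b2 n2 by (metis One_nat_def Suc_1 le_trans one_le_numeral power_increasing power_one_right)
  then have "(b-1) * a \<ge> 1" using a_eq b2 by simp
  then show ?thesis by (cases a) auto
qed

lemma g_ge: "g \<ge> (b - 1) * a + 1" unfolding g_def using a_eq dpos by simp

end

lemma digit_lemma:
  fixes b :: nat
  assumes b2: "b \<ge> 2"
  shows "(\<Sum>i<n. c i * b ^ i) mod b ^ n = b ^ n - 1 \<Longrightarrow> n * (b - 1) \<le> (\<Sum>i<n. c i)"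
proof (induction n arbitrary: c)
  case 0 then show ?case by simp
next
  case (Suc n)
  define Y where "Y = (\<Sum>i<n. c (Suc i) * b ^ i)"
  define X where "X = (\<Sum>i<Suc n. c i * b ^ i)"
  have XY: "X = c 0 + b * Y" unfolding X_def Y_def
    by (simp only: sum.lessThan_Suc_shift) (simp add: sum_distrib_left algebra_simps)
  have bn: "b ^ n \<ge> 1" using b2 by simp
  have hb: "b ^ Suc n - 1 = b * (b ^ n - 1) + (b - 1)" using bn b2
    by (simp add: algebra_simps right_diff_distrib')
  have "X mod b = (X mod b ^ Suc n) mod b" by (simp add: mod_mod_cancel)
  also have "\<dots> = (b ^ Suc n - 1) mod b" using Suc.prems X_def by simp
  also have "\<dots> = (b - 1 + (b ^ n - 1) * b) mod b" using hb by (simp add: mult.commute add.commute)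
  also have "\<dots> = b - 1" using b2 by (simp only: mod_mult_self1) simp
  finally have c0: "c 0 mod b = b - 1" using XY by simp
  have c0ge: "c 0 - c 0 div b \<ge> b - 1"
  proof -
    have "c 0 = b * (c 0 div b) + (b - 1)" using c0 by (metis div_mult_mod_eq mult.commute)
    moreover have "c 0 div b \<le> b * (c 0 div b)" using b2 by simp
    ultimately show ?thesis by linarith
  qed
  show ?case
  proof (cases "n = 0")
    case True
    then show ?thesis using c0 b2 by simp (metis mod_less_eq_dividend)
  next
    case False
    define c' where "c' = (\<lambda>i. c (Suc i) + (if i = 0 then c 0 div b else 0))"
    have e: "(\<lambda>i. (if i = 0 then c 0 div b else 0) * b ^ i) = (\<lambda>i. if i = 0 then c 0 div b else 0)" by auto
    have s1: "(\<Sum>i<n. c' i * b ^ i) = Y + c 0 div b"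
      unfolding c'_def Y_def distrib_right sum.distrib e using False by (simp add: sum.delta)
    have s2: "(\<Sum>i<n. c' i) = (\<Sum>i<n. c (Suc i)) + c 0 div b"
      unfolding c'_def using False by (simp add: sum.distrib)
    have X2: "X = (b - 1) + b * (Y + c 0 div b)"
      using XY c0 by (simp add: algebra_simps) (metis add.commute div_mult_mod_eq mult.commute)
    have X3: "X = (b - 1) + (Y + c 0 div b) * b" using X2 by (simp add: mult.commute)
    have "X mod (b * b ^ n) = b * ((X div b) mod b ^ n) + X mod b" by (rule mod_mult2_eq)
    moreover have "X div b = Y + c 0 div b" by (subst X3, subst div_mult_self1) (use b2 in auto)
    moreover have "X mod b = b - 1" by (subst X3, subst mod_mult_self1) (use b2 in auto)
    moreover have "X mod (b * b ^ n) = b * (b ^ n - 1) + (b - 1)" using Suc.prems X_def hb by simp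
    ultimately have "b * ((Y + c 0 div b) mod b ^ n) + (b - 1) = b * (b ^ n - 1) + (b - 1)" by metis
    then have "b * ((Y + c 0 div b) mod b ^ n) = b * (b ^ n - 1)" by (simp only: add_right_cancel)
    then have "(Y + c 0 div b) mod b ^ n = b ^ n - 1" using b2 by simp
    then have "n * (b - 1) \<le> (\<Sum>i<n. c' i)" using Suc.IH s1 by simp
    moreover have "(\<Sum>i<Suc n. c i) = c 0 + (\<Sum>i<n. c (Suc i))" by (simp only: sum.lessThan_Suc_shift)
    moreover have "c 0 div b \<le> c 0" by (rule div_le_dividend)
    moreover have "Suc n * (b - 1) = (b - 1) + n * (b - 1)" by simp
    ultimately show ?thesis using s2 c0ge by linarith
  qed
qed

context th begin

lemma V_add: "V (\<lambda>i. c i + e i) = V c + V e"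
  unfolding V_def by (simp add: algebra_simps sum.distrib)

lemma V_diff: "(\<And>i. i < n \<Longrightarrow> e i \<le> c i) \<Longrightarrow> V (\<lambda>i. c i - e i) + V e = V c"
  unfolding V_def sum.distrib[symmetric]
  by (rule sum.cong) (auto simp: add_mult_distrib[symmetric])

lemma V_single: assumes "k < n" shows "V (\<lambda>i. if i = k then m else 0) = m * G k"
proof -
  have eq: "(\<lambda>i. (if i = k then m else 0) * G i) = (\<lambda>i. if i = k then m * G k else 0)" by auto
  show ?thesis unfolding V_def eq using assms by (simp add: sum.delta)
qed

lemma S_add: "x \<in> S \<Longrightarrow> y \<in> S \<Longrightarrow> x + y \<in> S"
  unfolding S_def by (auto, metis V_add of_nat_add)

lemma S_V: "int (V c) \<in> S" unfolding S_def by auto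

lemma S_G: "k < n \<Longrightarrow> int (m * G k) \<in> S"
  using S_V[of "\<lambda>i. if i = k then m else 0"] V_single by simp

lemma S_0: "0 \<in> S" using S_G[of 0 0] n2 by simp

definition M :: "(nat \<Rightarrow> nat) \<Rightarrow> nat" where "M c = (\<Sum>i<n. c i * R i)"
definition N :: "(nat \<Rightarrow> nat) \<Rightarrow> nat" where "N c = (\<Sum>i<n. c i)"
definition P :: "(nat \<Rightarrow> nat) \<Rightarrow> nat" where "P c = (\<Sum>i<n. c i * b ^ i)"

lemma V_MN: "V c = g * M c + a * N c"
  unfolding V_def M_def N_def G_eq by (simp add: algebra_simps sum.distrib sum_distrib_left)

lemma P_MN: "P c = (b - 1) * M c + N c"
  unfolding P_def M_def N_def by (simp add: bpow_R algebra_simps sum.distrib sum_distrib_left)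

lemma R_ge: "R i \<ge> i"
proof (induction i)
  case (Suc i)
  have "R i \<le> b * R i" using b2 by simp
  then have "i \<le> b * R i" using Suc.IH by linarith
  then show ?case by (simp add: R_Suc)
qed simp

lemma n_lt_a: "n - 1 < a"
  using R_ge[of n] n2 unfolding a_def by simp

lemma coprime_ga: "coprime g a"
proof -
  have "coprime a d" using cop unfolding a_def R_def by (simp add: coprime_iff_gcd_eq_1)
  moreover have "g = (b-1) * a + d" unfolding g_def a_eq by simp
  ultimately show ?thesis by (simp add: coprime_iff_gcd_eq_1 gcd.commute gcd_add_mult)
qed

lemma gap:
  assumes j1: "1 \<le> j" and jn: "j \<le> n - 1"
  shows "int a * int g - int j * int d \<notin> S"
proof
  assume "int a * int g - int j * int d \<in> S"
  then obtain c where cv: "int a * int g - int j * int d = int (V c)" unfolding S_def by auto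
  have ia: "int (b-1) * int a = int b ^ n - 1" using a_eq bpos[of n]
    by (metis of_nat_mult of_nat_diff of_nat_power of_nat_1)
  have dg: "int d = int g - int (b - 1) * int a" unfolding g_def ia using bpos[of n]
    by (simp add: of_nat_diff)
  have e1: "int g * (int a - int j - int (M c)) = int a * (int (N c) - int j * int (b - 1))"
    using cv unfolding V_MN dg by (simp add: algebra_simps)
  have Ma: "M c < a"
  proof (rule ccontr)
    assume "\<not> M c < a"
    then have "int g * int (M c) \<ge> int g * int a" by (simp add: mult_left_mono)
    moreover have "int j * int d > 0" using j1 dpos by simp
    moreover have "int (V c) \<ge> int g * int (M c)" unfolding V_MN by simp
    ultimately show False using cv by (simp add: mult.commute)
  qed
  have "int a dvd int g * (int a - int j - int (M c))" using e1 by simp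
  moreover have "coprime (int a) (int g)" using coprime_ga by (simp add: coprime_commute)
  ultimately have "int a dvd (int a - int j - int (M c))" using coprime_dvd_mult_right_iff by blast
  then have dv: "int a dvd (int a - (int a - int j - int (M c)))" by (rule dvd_diff[OF dvd_refl])
  then have dv: "int a dvd (int j + int (M c))" by simp
  have jlt: "j < a" using jn n_lt_a by simp
  have "j + M c = a"
  proof -
    obtain k where k: "int j + int (M c) = int a * k" using dv by auto
    have "int a * k > 0" using k j1 by simp
    then have "k > 0" using a_pos by (simp add: zero_less_mult_iff)
    moreover have "k < 2"
    proof (rule ccontr)
      assume "\<not> k < 2"
      then have "int a * k \<ge> int a * 2" using a_pos by (intro mult_left_mono) auto
      then show False using k jlt Ma by linarith
    qed
    ultimately have "k = 1" by simp
    then show ?thesis using k by simp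
  qed
  then have "int a - int j - int (M c) = 0" by simp
  then have "int a * (int (N c) - int j * int (b - 1)) = 0" using e1 by simp
  then have "int (N c) = int (j * (b - 1))" using a_pos by simp
  then have Nc: "N c = j * (b - 1)" by (simp only: of_nat_eq_iff)
  have "(b-1) * M c + (b-1) * j = (b-1) * a" using \<open>j + M c = a\<close>
    by (metis add.commute add_mult_distrib2)
  then have "P c = b ^ n - 1" unfolding P_MN Nc using a_eq by (simp add: mult.commute)
  then have "(\<Sum>i<n. c i * b ^ i) mod b ^ n = b ^ n - 1" unfolding P_def using bpos[of n] by simp
  then have "n * (b - 1) \<le> N c" unfolding N_def using digit_lemma b2 by blast
  moreover have "j * (b - 1) < n * (b - 1)" using jn n2 b2 by (intro mult_strict_right_mono) auto
  ultimately show False using Nc by linarith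
qed

end

context th begin

definition L :: "(nat \<Rightarrow> nat) \<Rightarrow> (nat \<Rightarrow> nat) \<Rightarrow> nat" where
  "L w c = (\<Sum>i<n. c i * w i)"

lemma L_add: "L w (\<lambda>i. c i + e i) = L w c + L w e"
  unfolding L_def by (simp add: algebra_simps sum.distrib)

lemma L_diff: "(\<And>i. i < n \<Longrightarrow> e i \<le> c i) \<Longrightarrow> L w (\<lambda>i. c i - e i) + L w e = L w c"
  unfolding L_def sum.distrib[symmetric]
  by (rule sum.cong) (auto simp: add_mult_distrib[symmetric])

lemma L_single: assumes "k < n" shows "L w (\<lambda>i. if i = k then x else 0) = x * w k"
proof -
  have eq: "(\<lambda>i. (if i = k then x else 0) * w i) = (\<lambda>i. if i = k then x * w k else 0)" by auto
  show ?thesis unfolding L_def eq using assms by (simp add: sum.delta)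
qed

lemma L_two: "k < n \<Longrightarrow> j < n \<Longrightarrow>
   L w (\<lambda>i. (if i = k then x else 0) + (if i = j then y else 0)) = x * w k + y * w j"
  using L_add[of w "\<lambda>i. if i = k then x else 0" "\<lambda>i. if i = j then y else 0"] L_single by simp

lemma L_move: "(\<And>i. i < n \<Longrightarrow> e i \<le> c i) \<Longrightarrow>
    L w (\<lambda>i. c i - e i + e' i) + L w e = L w c + L w e'"
  using L_add[of w "\<lambda>i. c i - e i" e'] L_diff[of e c w] by simp

lemma V_L: "V c = L G c" unfolding V_def L_def ..
lemma M_L: "M c = L R c" unfolding M_def L_def ..
lemma N_L: "N c = L (\<lambda>_. 1) c" unfolding N_def L_def by simp
lemma P_L: "P c = L (\<lambda>i. b ^ i) c" unfolding P_def L_def ..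

lemma V_int: "int (b - 1) * int (V c) = int g * int (P c) - int d * int (N c)"
proof -
  have "int (b - 1) * int (V c) = (\<Sum>i<n. int (c i) * (int (b - 1) * int (G i)))"
    unfolding V_def by (simp add: sum_distrib_left mult.commute mult.left_commute)
  also have "\<dots> = (\<Sum>i<n. int g * (int (c i) * int b ^ i) - int d * int (c i))"
    by (rule sum.cong) (simp_all only: mult.assoc[symmetric] G_int, simp add: algebra_simps)
  also have "\<dots> = int g * int (P c) - int d * int (N c)"
    unfolding P_def N_def by (simp add: sum_subtractf sum_distrib_left)
  finally show ?thesis .
qed

definition t :: "nat \<Rightarrow> nat \<Rightarrow> nat" where
  "t v i = (if v < i \<and> i < n then b - 1 else if i = v then b else 0)"

definition tt :: "nat \<Rightarrow> nat \<Rightarrow> nat \<Rightarrow> nat" where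
  "tt m v i = (if v < i \<and> i < m then b - 1 else if i = v then b else 0)"

lemma tt_sums: "(\<Sum>i<Suc v + k. tt (Suc v + k) v i * b ^ i) = b ^ (Suc v + k) \<and>
                (\<Sum>i<Suc v + k. tt (Suc v + k) v i) = (b - 1) * k + b"
proof (induction k)
  case 0
  have e1: "(\<lambda>i. tt (Suc v) v i * b ^ i) = (\<lambda>i. if i = v then b * b ^ v else 0)"
    unfolding tt_def by auto
  have e2: "(\<lambda>i. tt (Suc v) v i) = (\<lambda>i. if i = v then b else 0)"
    unfolding tt_def by auto
  have "(\<Sum>i<Suc v. tt (Suc v) v i * b ^ i) = b ^ Suc v" by (simp only: e1 sum.delta) simp
  moreover have "(\<Sum>i<Suc v. tt (Suc v) v i) = b" by (simp only: e2 sum.delta) simp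
  ultimately show ?case by simp
next
  case (Suc k)
  define m where "m = Suc v + k"
  have c1: "(\<Sum>i<m. tt (Suc m) v i * b ^ i) = (\<Sum>i<m. tt m v i * b ^ i)"
    by (rule sum.cong) (auto simp: tt_def)
  have c2: "(\<Sum>i<m. tt (Suc m) v i) = (\<Sum>i<m. tt m v i)"
    by (rule sum.cong) (auto simp: tt_def)
  have tm: "tt (Suc m) v m = b - 1" unfolding tt_def m_def by simp
  have "(\<Sum>i<Suc m. tt (Suc m) v i * b ^ i) = b ^ m + (b - 1) * b ^ m"
    using Suc.IH c1 tm unfolding m_def by simp
  also have "\<dots> = b ^ Suc m" using b2 by (simp add: algebra_simps)
  finally have s1: "(\<Sum>i<Suc m. tt (Suc m) v i * b ^ i) = b ^ Suc m" .
  have s2: "(\<Sum>i<Suc m. tt (Suc m) v i) = (b - 1) * Suc k + b"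
    using Suc.IH c2 tm unfolding m_def by simp
  show ?case using s1 s2 unfolding m_def by simp
qed

lemma t_sums: assumes "v < n"
  shows "P (t v) = b ^ n" "N (t v) = (b - 1) * (n - v - 1) + b"
proof -
  have nn: "n = Suc v + (n - v - 1)" using assms by simp
  have tt: "t v = tt n v" unfolding t_def tt_def by auto
  show "P (t v) = b ^ n" unfolding P_def tt using tt_sums[of v "n - v - 1"] nn by metis
  show "N (t v) = (b - 1) * (n - v - 1) + b" unfolding N_def tt using tt_sums[of v "n - v - 1"] nn by metis
qed

lemma alg1: fixes x A B dd gg m :: int
  shows "(x - 1) * A = B - 1 \<Longrightarrow> gg = B - 1 + dd \<Longrightarrow>
    gg * B - dd * ((x - 1) * (m - 1) + x) = (x - 1) * (A * gg - m * dd + A)"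
  by algebra

lemma Vt: assumes "1 \<le> v" "v < n"
  shows "int (V (t v)) = int a * int g - int (n - v) * int d + int a"
proof -
  have ia: "int (b-1) * int a = int b ^ n - 1" using a_eq bpos[of n]
    by (metis of_nat_mult of_nat_diff of_nat_power of_nat_1)
  have ig: "int g = int b ^ n - 1 + int d" unfolding g_def using bpos[of n] by (simp add: of_nat_diff)
  have nv: "int (n - v - 1) = int (n - v) - 1" using assms by simp
  have "int (b - 1) * int (V (t v)) = int g * int b ^ n - int d * (int (b - 1) * int (n - v - 1) + int b)"
    using V_int[of "t v"] t_sums[OF assms(2)] by simp
  also have "\<dots> = int (b - 1) * (int a * int g - int (n - v) * int d + int a)"
    using alg1[of "int b" "int a" "int b ^ n" "int g" "int d" "int (n - v)"] ia ig nv b2 by (simp add: of_nat_diff)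
  finally show ?thesis using b2 by simp
qed

lemma G0: "G 0 = a" unfolding G_def by simp
lemma G1: "G 1 = g + a" unfolding G_eq R_1 by simp

lemma R_lt_g: "i < n \<Longrightarrow> R i \<le> g"
proof -
  assume "i < n"
  then have "b ^ i \<le> b ^ n" using b2 by (intro power_increasing) auto
  then have h1: "(b - 1) * R i \<le> g" using R_eq[of i] unfolding g_def by simp
  have "R i * 1 \<le> R i * (b - 1)" using b2 by (intro mult_left_mono) auto
  then have h2: "R i \<le> (b - 1) * R i" by (simp only: mult_1_right mult.commute)
  show ?thesis using h1 h2 by linarith
qed

lemma pf_add:
  assumes J1: "1 \<le> J" and Jn: "J \<le> n - 1" and i: "i < n"
  shows "int a * int g - int J * int d + int (G i) \<in> S"
proof -
  have dg: "int d = int g - int (b - 1) * int a"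
  proof -
    have ia: "int (b-1) * int a = int b ^ n - 1" using a_eq bpos[of n]
      by (metis of_nat_mult of_nat_diff of_nat_power of_nat_1)
    show ?thesis unfolding g_def ia using bpos[of n] by (simp add: of_nat_diff)
  qed
  show ?thesis
  proof (cases "i = 0")
    case True
    then show ?thesis using Vt[of "n - J"] J1 Jn S_V[of "t (n - J)"] n2 G0 by simp
  next
    case False
    show ?thesis
    proof (cases "J \<le> R i")
      case True
      define k0 where "k0 = g + 1 + J * (b - 1) + J - R i"
      have "R i \<le> g" using R_lt_g i by simp
      then have k0i: "int k0 = int g + 1 + int J * int (b - 1) + int J - int (R i)"
        unfolding k0_def by (simp add: of_nat_diff)
      have e: "int ((R i - J) * G 1) + int (k0 * G 0) = (int (R i) - int J) * (int g + int a) + int k0 * int a"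
        unfolding G1 G0 using True by (simp add: of_nat_diff)
      have e2: "(int (R i) - int J) * (int g + int a) + int k0 * int a = int a * int g - int J * int d + (int g * int (R i) + int a)"
        using k0i dg by algebra
      have "int ((R i - J) * G 1) + int (k0 * G 0) = int a * int g - int J * int d + int (G i)"
        unfolding e e2 by (simp add: G_eq)
      moreover have "int ((R i - J) * G 1) + int (k0 * G 0) \<in> S"
        using S_add S_G n2 by simp
      ultimately show ?thesis by simp
    next
      case False
      define J' where "J' = J - R i"
      have J'1: "1 \<le> J'" using False unfolding J'_def by simp
      have J'n: "J' \<le> n - 1" using Jn unfolding J'_def by simp
      have v1: "int (V (t (n - J'))) = int a * int g - int J' * int d + int a"
        using Vt[of "n - J'"] J'1 J'n n2 by simp
      have j': "int J' = int J - int (R i)" using False unfolding J'_def by simp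
      have e3: "int (((b - 1) * R i) * G 0) = int (b - 1) * int (R i) * int a" by (simp add: G0)
      have e4: "int (G i) = int g * int (R i) + int a" by (simp add: G_eq)
      have "int (V (t (n - J'))) + int (((b - 1) * R i) * G 0) = int a * int g - int J * int d + int (G i)"
        unfolding v1 e3 e4 using j' dg by algebra
      moreover have "int (V (t (n - J'))) + int (((b - 1) * R i) * G 0) \<in> S"
        using n2 by (intro S_add S_V S_G) simp
      ultimately show ?thesis by simp
    qed
  qed
qed

end

context th begin

lemma I1: assumes "1 \<le> j" shows "b * G k + G j = G (Suc k) + b * G (j - 1)"
proof -
  obtain j' where j: "j = Suc j'" using assms by (cases j) auto
  show ?thesis unfolding j G_eq R_Suc by (simp add: algebra_simps)
qed

lemma alg2: fixes A x Rn Rj gg B dd :: int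
  shows "A = x * Rn + 1 \<Longrightarrow> gg + 1 = B + dd \<Longrightarrow>
    x * (gg * Rn + A) + (gg * (x * Rj + 1) + A) = x * (gg * Rj + A) + (B + dd) * A"
  by algebra

lemma I2: assumes "1 \<le> j" shows "b * G (n - 1) + G j = b * G (j - 1) + (b ^ n + d) * G 0"
proof -
  obtain j' where j: "j = Suc j'" using assms by (cases j) auto
  obtain n' where nn: "n = Suc n'" using n2 by (cases n) auto
  have "a = R (Suc n')" unfolding a_def using nn by simp
  then have ha: "int a = int b * int (R n') + 1" unfolding R_Suc by simp
  have hg: "int g + 1 = int b ^ n + int d" unfolding g_def using bpos[of n] by (simp add: of_nat_diff)
  have n1: "n - 1 = n'" using nn by simp
  have f1: "int (G (n - 1)) = int g * int (R n') + int a" unfolding n1 G_eq by simp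
  have f2: "int (G j) = int g * (int b * int (R j') + 1) + int a" unfolding j G_eq R_Suc by (simp add: algebra_simps)
  have f3: "int (G (j - 1)) = int g * int (R j') + int a" unfolding j G_eq by simp
  have f4: "int (G 0) = int a" unfolding G0 by simp
  have "int (b * G (n - 1) + G j) = int (b * G (j - 1) + (b ^ n + d) * G 0)"
    unfolding of_nat_add of_nat_mult f1 f2 f3 f4 of_nat_power using alg2[OF ha hg] by simp
  then show ?thesis by (simp only: of_nat_eq_iff)
qed

lemma rr: "k \<le> a - 1 \<Longrightarrow> \<exists>c. M c = a - 1 - k \<and> N c \<le> b + (b - 1) * k"
proof (induction k)
  case 0
  obtain n' where nn: "n = Suc n'" using n2 by (cases n) auto
  define c where "c = (\<lambda>i. if i = n - 1 then b else 0)"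
  have "M c = b * R (n - 1)" unfolding M_L c_def using L_single n2 by simp
  also have "\<dots> = a - 1"
  proof -
    have "a = R (Suc n')" unfolding a_def using nn by simp
    then show ?thesis unfolding R_Suc using nn by simp
  qed
  finally have "M c = a - 1" .
  moreover have "N c = b" unfolding N_L c_def using L_single n2 by simp
  ultimately show ?case by auto
next
  case (Suc k)
  then obtain c where c: "M c = a - 1 - k" "N c \<le> b + (b - 1) * k" by auto
  have "M c > 0" using c Suc.prems by simp
  then have "\<exists>i<n. c i > 0 \<and> R i > 0"
  proof (rule contrapos_pp)
    assume "\<not> (\<exists>i<n. c i > 0 \<and> R i > 0)"
    then have "\<forall>i\<in>{..<n}. c i * R i = 0" by auto
    then show "\<not> M c > 0" unfolding M_def by simp
  qed
  then obtain i where i: "i < n" "c i > 0" "R i > 0" by auto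
  have i1: "i \<ge> 1" using i by (cases i) auto
  define e where "e = (\<lambda>j::nat. if j = i then (1::nat) else 0)"
  define e' where "e' = (\<lambda>j::nat. if j = i - 1 then b else 0)"
  define c' where "c' = (\<lambda>j. c j - e j + e' j)"
  have le: "\<And>j. j < n \<Longrightarrow> e j \<le> c j" unfolding e_def using i by auto
  have mvR: "L R (\<lambda>j. c j - e j + e' j) + L R e = L R c + L R e'" by (rule L_move, rule le)
  have mvN: "L (\<lambda>_. 1) (\<lambda>j. c j - e j + e' j) + L (\<lambda>_. 1) e = L (\<lambda>_. 1) c + L (\<lambda>_. 1) e'" by (rule L_move, rule le)
  have eR: "L R e = R i" unfolding e_def using L_single[of i R 1] i by simp
  have eN: "L (\<lambda>_. 1) e = 1" unfolding e_def using L_single[of i "\<lambda>_. 1" 1] i by simp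
  have e'R: "L R e' = b * R (i - 1)" unfolding e'_def using L_single[of "i - 1" R b] i by simp
  have e'N: "L (\<lambda>_. 1) e' = b" unfolding e'_def using L_single[of "i - 1" "\<lambda>_. 1" b] i by simp
  have "M c' + R i = M c + b * R (i - 1)"
    using mvR eR e'R unfolding M_L c'_def by simp
  moreover have "R i = b * R (i - 1) + 1" using i1 R_Suc[of "i - 1"] by simp
  ultimately have Mc': "M c' = a - 1 - Suc k" using c(1) by simp
  have Nc': "N c' + 1 = N c + b"
    using mvN eN e'N unfolding N_L c'_def by simp
  have "(b - 1) * Suc k = (b - 1) * k + (b - 1)" by simp
  then have "N c' \<le> b + (b - 1) * Suc k" using Nc' c(2) b2 by linarith
  then show ?case using Mc' by blast
qed

lemma large: assumes x: "x > int a * int g - int d" shows "x \<in> S"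
proof -
  have "coprime (int g) (int a)" using coprime_ga by simp
  then obtain y where y: "[int g * y = 1] (mod int a)" using cong_solve_coprime_int by blast
  define m where "m = (x * y) mod int a"
  have m0: "0 \<le> m" "m < int a" unfolding m_def using a_pos by auto
  have "[int g * m = int g * (x * y)] (mod int a)" unfolding m_def
    by (intro cong_scalar_left) (simp add: cong_def)
  moreover have "[int g * (x * y) = x * 1] (mod int a)"
    using cong_scalar_left[OF y, of x] by (simp add: algebra_simps)
  ultimately have "[int g * m = x] (mod int a)" using cong_trans by fastforce
  then have "int a dvd (x - int g * m)" using cong_iff_dvd_diff cong_sym by blast
  then obtain tt where tt: "x = int g * m + int a * tt" by (metis dvd_def diff_add_cancel add.commute)
  define k where "k = nat (int a - 1 - m)"
  have kk: "int k = int a - 1 - m" unfolding k_def using m0 by simp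
  have kle: "k \<le> a - 1" using kk m0 by linarith
  then obtain c where c: "M c = a - 1 - k" "N c \<le> b + (b - 1) * k" using rr by blast
  have Mm: "int (M c) = m" using c(1) kk a_pos kle by (simp add: of_nat_diff)
  have dg: "int d = int g - int (b - 1) * int a"
  proof -
    have ia: "int (b-1) * int a = int b ^ n - 1" using a_eq bpos[of n]
      by (metis of_nat_mult of_nat_diff of_nat_power of_nat_1)
    show ?thesis unfolding g_def ia using bpos[of n] by (simp add: of_nat_diff)
  qed
  have h1: "int a * tt = x - int g * m" using tt by simp
  have h2: "int g * int k = int g * int a - int g - int g * m" unfolding kk by (simp add: algebra_simps)
  have h3: "int a * tt > int g * int k + int (b - 1) * int a"
    using x h1 h2 dg by (simp add: algebra_simps)
  have "(b - 1) * a \<le> g" using g_ge by linarith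
  then have gg: "int (b - 1) * int a \<le> int g" by (metis of_nat_le_iff of_nat_mult)
  moreover have "int g * int k \<ge> int (b - 1) * int a * int k"
    using gg by (intro mult_right_mono) simp_all
  ultimately have "int a * tt > int a * (int (b - 1) * int k + int (b - 1))"
    using h3 by (simp add: algebra_simps)
  then have "tt > int (b - 1) * int k + int (b - 1)" using a_pos
    by (simp add: mult_less_cancel_left)
  moreover have "int (N c) \<le> int b + int (b - 1) * int k" using c(2) by (metis of_nat_add of_nat_mult of_nat_le_iff)
  moreover have "int (b - 1) = int b - 1" using b2 by simp
  ultimately have ttN: "tt \<ge> int (N c)" by linarith
  define c'' where "c'' = (\<lambda>i. c i + (if i = 0 then nat tt - N c else 0))"
  have "V c'' = V c + (nat tt - N c) * G 0"
    unfolding c''_def V_L L_add using L_single n2 by simp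
  then have "int (V c'') = int g * m + int a * int (N c) + (tt - int (N c)) * int a"
    using ttN unfolding V_MN G0 Mm[symmetric] by (simp add: of_nat_diff)
  also have "\<dots> = x" using tt by (simp add: algebra_simps)
  finally show ?thesis using S_V by metis
qed

end

context th begin

lemma V_pos_ex: "V c \<noteq> 0 \<Longrightarrow> \<exists>i<n. c i > 0"
proof (rule ccontr)
  assume "V c \<noteq> 0" "\<not> (\<exists>i<n. c i > 0)"
  then have "\<forall>i\<in>{..<n}. c i * G i = 0" by auto
  then have "V c = 0" unfolding V_def by simp
  then show False using \<open>V c \<noteq> 0\<close> by simp
qed

lemma V_split: assumes "i < n" "c i > 0"
  shows "V c = V (\<lambda>j. c j - (if j = i then 1 else 0)) + G i"
proof -
  have le: "\<And>j. j < n \<Longrightarrow> (if j = i then 1 else 0) \<le> c j" using assms by auto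
  have "V (\<lambda>j. c j - (if j = i then 1 else 0)) + V (\<lambda>j. if j = i then 1 else 0) = V c"
    unfolding V_L by (rule L_diff) (use le in auto)
  moreover have "V (\<lambda>j. if j = i then 1 else 0) = G i" using V_single[OF assms(1), of 1] by simp
  ultimately show ?thesis by simp
qed

lemma pf_sup:
  assumes J1: "1 \<le> J" and Jn: "J \<le> n - 1"
  shows "int a * int g - int J * int d \<notin> S \<and>
         (\<forall>s \<in> S - {0}. int a * int g - int J * int d + s \<in> S)"
proof (intro conjI ballI)
  show "int a * int g - int J * int d \<notin> S" using gap J1 Jn by blast
next
  fix s assume s: "s \<in> S - {0}"
  then obtain c where c: "s = int (V c)" unfolding S_def by auto
  then have "V c \<noteq> 0" using s by auto
  then obtain i where i: "i < n" "c i > 0" using V_pos_ex by blast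
  have "s = int (G i) + int (V (\<lambda>j. c j - (if j = i then 1 else 0)))"
    using V_split[of i c] i c by simp
  then have "int a * int g - int J * int d + s =
      (int a * int g - int J * int d + int (G i)) + int (V (\<lambda>j. c j - (if j = i then 1 else 0)))"
    by simp
  also have "\<dots> \<in> S" by (rule S_add[OF pf_add[OF J1 Jn i(1)] S_V])
  finally show "int a * int g - int J * int d + s \<in> S" .
qed

definition Phi :: "(nat \<Rightarrow> nat) \<Rightarrow> nat" where "Phi = L (\<lambda>i. (b + 1) ^ i)"

lemma Phi_bound: "Phi c \<le> V c * (b + 1) ^ n"
proof -
  have "Phi c = (\<Sum>i<n. c i * (b + 1) ^ i)" unfolding Phi_def L_def ..
  also have "\<dots> \<le> (\<Sum>i<n. c i * G i * (b + 1) ^ n)"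
  proof (rule sum_mono)
    fix i assume "i \<in> {..<n}"
    then have "(b + 1) ^ i \<le> (b + 1) ^ n" by (intro power_increasing) auto
    moreover have "1 \<le> G i" unfolding G_eq using a_pos by simp
    ultimately have "(b + 1) ^ i \<le> G i * (b + 1) ^ n"
      by (metis le_trans mult_1 mult_le_mono1)
    then show "c i * (b + 1) ^ i \<le> c i * G i * (b + 1) ^ n"
      by (metis mult.assoc mult_le_mono2)
  qed
  also have "\<dots> = V c * (b + 1) ^ n" unfolding V_def by (simp add: sum_distrib_right)
  finally show ?thesis .
qed

lemma pf_sub:
  assumes u: "u \<notin> S" and pf: "\<forall>s \<in> S - {0}. u + s \<in> S"
  shows "\<exists>J. 1 \<le> J \<and> J \<le> n - 1 \<and> u = int a * int g - int J * int d"
proof -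
  have "int (G 0) \<in> S - {0}" using S_G[of 0 1] n2 G0 a_pos by simp
  then have "u + int (G 0) \<in> S" using pf by blast
  then obtain c0 where c0: "u + int a = int (V c0)" unfolding S_def G0 by auto
  have "\<exists>x. V x = V c0 \<and> (\<forall>y. V y = V c0 \<longrightarrow> Phi y \<le> Phi x)"
  proof -
    have P2: "\<forall>y. V y = V c0 \<longrightarrow> Phi y < V c0 * (b + 1) ^ n + 1"
      using Phi_bound by (metis le_imp_less_Suc Suc_eq_plus1)
    show ?thesis using ex_has_greatest_nat[of "\<lambda>c. V c = V c0" c0 Phi, OF refl P2] by blast
  qed
  then obtain c where cV: "V c = V c0" and cmax: "\<And>c'. V c' = V c0 \<Longrightarrow> Phi c' \<le> Phi c" by blast
  have Z: "c' 0 = 0" if "V c' = V c0" for c'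
  proof (rule ccontr)
    assume "c' 0 \<noteq> 0"
    then have "V c' = V (\<lambda>j. c' j - (if j = 0 then 1 else 0)) + G 0" using V_split[of 0 c'] n2 by simp
    then have "u = int (V (\<lambda>j. c' j - (if j = 0 then 1 else 0)))" using c0 that G0 by simp
    then show False using u S_V by metis
  qed
  have nomove: False
    if j1: "1 \<le> j" and jk: "j \<le> k" and kn: "k < n" and ck: "b + (if j = k then 1 else 0) \<le> c k"
      and cj: "1 \<le> c j" for j k
  proof -
    define e where "e = (\<lambda>i. (if i = k then b else 0) + (if i = j then 1 else (0::nat)))"
    have le: "\<And>i. i < n \<Longrightarrow> e i \<le> c i" unfolding e_def using ck cj by auto
    have jn: "j < n" using jk kn by simp
    have eG: "L G e = b * G k + 1 * G j" unfolding e_def by (rule L_two[OF kn jn])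
    show False
    proof (cases "Suc k < n")
      case True
      define e' where "e' = (\<lambda>i. (if i = Suc k then 1 else 0) + (if i = j - 1 then b else (0::nat)))"
      define c' where "c' = (\<lambda>i. c i - e i + e' i)"
      have mv: "L G c' + L G e = L G c + L G e'" unfolding c'_def by (rule L_move, rule le)
      have e'G: "L G e' = 1 * G (Suc k) + b * G (j - 1)" unfolding e'_def
        by (rule L_two) (use True jn in auto)
      have Vc': "V c' = V c0" using mv eG e'G I1[OF j1, of k] cV unfolding V_L by simp
      show False
      proof (cases "j = 1")
        case True
        have "c' 0 = c 0 - e 0 + e' 0" unfolding c'_def ..
        also have "\<dots> = c 0 + b" unfolding e_def e'_def using True j1 jk by auto
        finally have "c' 0 \<ge> b" by simp
        then show False using Z[OF Vc'] b2 by simp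
      next
        case False
        have mvP: "Phi c' + Phi e = Phi c + Phi e'" unfolding c'_def Phi_def by (rule L_move, rule le)
        have Pe: "Phi e = b * (b + 1) ^ k + 1 * (b + 1) ^ j" unfolding e_def Phi_def
          by (rule L_two[OF kn jn])
        have Pe': "Phi e' = 1 * (b + 1) ^ Suc k + b * (b + 1) ^ (j - 1)" unfolding e'_def Phi_def
          by (rule L_two) (use \<open>Suc k < n\<close> jn in auto)
        have jj: "j = Suc (j - 1)" using j1 by simp
        have p1: "(b + 1) ^ j = b * (b + 1) ^ (j - 1) + (b + 1) ^ (j - 1)"
          by (subst jj) (simp add: algebra_simps)
        have p2: "(b + 1) ^ (j - 1) < (b + 1) ^ k" using jk j1 b2
          by (intro power_strict_increasing) auto
        have "Phi e < Phi e'" unfolding Pe Pe' using p1 p2 by (simp add: algebra_simps)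
        then have "Phi c' > Phi c" using mvP by linarith
        then show False using cmax[OF Vc'] by simp
      qed
    next
      case False
      then have kn1: "k = n - 1" using kn by simp
      define e' where "e' = (\<lambda>i. (if i = j - 1 then b else 0) + (if i = 0 then b ^ n + d else (0::nat)))"
      define c' where "c' = (\<lambda>i. c i - e i + e' i)"
      have mv: "L G c' + L G e = L G c + L G e'" unfolding c'_def by (rule L_move, rule le)
      have e'G: "L G e' = b * G (j - 1) + (b ^ n + d) * G 0" unfolding e'_def
        by (rule L_two) (use jn in auto)
      have Vc': "V c' = V c0" using mv eG e'G I2[OF j1] cV kn1 unfolding V_L by simp
      have "c' 0 = c 0 - e 0 + e' 0" unfolding c'_def ..
      also have "\<dots> \<ge> b ^ n + d" unfolding e'_def by simp
      finally have "c' 0 \<ge> b ^ n + d" .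
      then show False using Z[OF Vc'] dpos by simp
    qed
  qed
  have c00: "c 0 = 0" using Z cV by simp
  obtain v where v1: "1 \<le> v" and vn: "v < n" and ct: "\<And>i. i < n \<Longrightarrow> c i \<le> t v i"
  proof (cases "\<exists>i<n. c i > 0")
    case False
    then have "\<And>i. i < n \<Longrightarrow> c i \<le> t 1 i" by auto
    then show ?thesis using that[of 1] n2 by simp
  next
    case True
    define v where "v = (LEAST i. i < n \<and> c i > 0)"
    have vP: "v < n \<and> c v > 0" unfolding v_def using True by (rule LeastI_ex)
    have vmin: "\<And>i. i < v \<Longrightarrow> c i = 0"
    proof -
      fix i assume "i < v"
      then have "\<not> (i < n \<and> c i > 0)" unfolding v_def by (rule not_less_Least)
      then show "c i = 0" using \<open>i < v\<close> vP by auto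
    qed
    have v1: "1 \<le> v" using vP c00 by (cases v) auto
    have "c i \<le> t v i" if "i < n" for i
    proof -
      consider "i < v" | "i = v" | "v < i" by linarith
      then show ?thesis
      proof cases
        case 1 then show ?thesis using vmin by simp
      next
        case 2
        have "c v \<le> b"
        proof (rule ccontr)
          assume "\<not> c v \<le> b"
          then show False using nomove[of v v] v1 vP by simp
        qed
        then show ?thesis unfolding t_def using 2 by simp
      next
        case 3
        have "c i \<le> b - 1"
        proof (rule ccontr)
          assume "\<not> c i \<le> b - 1"
          then have "b \<le> c i" using b2 by linarith
          then show False using nomove[of v i] v1 vP that 3 by simp
        qed
        then show ?thesis unfolding t_def using 3 that by simp
      qed
    qed
    then show ?thesis using that[of v] v1 vP by blast
  qed
  define s where "s = V (\<lambda>i. t v i - c i)"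
  have "s + V c = V (t v)" unfolding s_def V_L by (rule L_diff) (use ct in auto)
  then have "u + int s = int a * int g - int (n - v) * int d"
    using Vt[OF v1 vn] c0 cV by simp
  moreover have J: "1 \<le> n - v" "n - v \<le> n - 1" using v1 vn by auto
  show ?thesis
  proof (cases "s = 0")
    case True
    then show ?thesis using \<open>u + int s = _\<close> J by auto
  next
    case False
    then have "int s \<in> S - {0}" unfolding s_def using S_V by simp
    then have "u + int s \<in> S" using pf by blast
    then show ?thesis using \<open>u + int s = _\<close> gap[OF J] by simp
  qed
qed

end

context th begin

lemma SG: "semigroup_gen (map G [0..<n]) = S"
proof -
  have "\<And>c. (\<Sum>i<length (map G [0..<n]). c i * map G [0..<n] ! i) = V c"
    unfolding V_def by (rule sum.cong) auto
  then show ?thesis unfolding semigroup_gen_def S_def by simp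
qed

lemma PFc: "pseudo_frobenius (map G [0..<n]) = {int a * int g - int J * int d | J. 1 \<le> J \<and> J \<le> n - 1}"
  unfolding pseudo_frobenius_def SG
proof (intro set_eqI iffI)
  fix u assume "u \<in> {u. u \<notin> S \<and> (\<forall>s\<in>S - {0}. u + s \<in> S)}"
  then show "u \<in> {int a * int g - int J * int d | J. 1 \<le> J \<and> J \<le> n - 1}"
    using pf_sub by blast
next
  fix u assume "u \<in> {int a * int g - int J * int d | J. 1 \<le> J \<and> J \<le> n - 1}"
  then show "u \<in> {u. u \<notin> S \<and> (\<forall>s\<in>S - {0}. u + s \<in> S)}"
    using pf_sup by blast
qed

lemma FR: "frobenius (map G [0..<n]) = int a * int g - int d"
  unfolding frobenius_def SG
proof (rule Greatest_equality)
  show "int a * int g - int d \<notin> S" using gap[of 1] n2 by simp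
next
  fix y assume "y \<notin> S"
  then show "y \<le> int a * int g - int d" using large[of y] by (meson not_le)
qed

lemma final:
  "sg_type (map G [0..<n]) = n - 1 \<and>
   pseudo_frobenius (map G [0..<n]) = {frobenius (map G [0..<n]) - int k * int d | k. k \<le> n - 2}"
proof -
  have eq: "{frobenius (map G [0..<n]) - int k * int d | k. k \<le> n - 2} =
        (\<lambda>k. int a * int g - int d - int k * int d) ` {..n - 2}"
    unfolding FR by auto
  have eq2: "{int a * int g - int J * int d | J. 1 \<le> J \<and> J \<le> n - 1} =
        (\<lambda>k. int a * int g - int d - int k * int d) ` {..n - 2}"
  proof (intro set_eqI iffI)
    fix x assume "x \<in> {int a * int g - int J * int d | J. 1 \<le> J \<and> J \<le> n - 1}"
    then obtain J where J: "1 \<le> J" "J \<le> n - 1" "x = int a * int g - int J * int d" by auto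
    then have "x = int a * int g - int d - int (J - 1) * int d" by (simp add: of_nat_diff algebra_simps)
    moreover have "J - 1 \<in> {..n - 2}" using J by auto
    ultimately show "x \<in> (\<lambda>k. int a * int g - int d - int k * int d) ` {..n - 2}" by blast
  next
    fix x assume "x \<in> (\<lambda>k. int a * int g - int d - int k * int d) ` {..n - 2}"
    then obtain k where k: "k \<le> n - 2" "x = int a * int g - int d - int k * int d" by auto
    then have "x = int a * int g - int (k + 1) * int d" by (simp add: algebra_simps)
    moreover have "1 \<le> k + 1" "k + 1 \<le> n - 1" using k n2 by auto
    ultimately show "x \<in> {int a * int g - int J * int d | J. 1 \<le> J \<and> J \<le> n - 1}" by blast
  qed
  have inj: "inj_on (\<lambda>k. int a * int g - int d - int k * int d) {..n - 2}"
    using dpos by (intro inj_onI) simp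
  have "sg_type (map G [0..<n]) = card ((\<lambda>k. int a * int g - int d - int k * int d) ` {..n - 2})"
    unfolding sg_type_def PFc eq2 ..
  also have "\<dots> = n - 1" using card_image[OF inj] n2 by simp
  finally show ?thesis unfolding PFc eq eq2 by simp
qed

end

theorem theorem4p3:
  fixes b n d a :: nat and A :: "nat list"
  assumes "b \<ge> 2" and "n \<ge> 2"
    and "a = (b ^ n - 1) div (b - 1)"
    and "d > 0" and "gcd a d = 1"
    and "A = map (\<lambda>i. b ^ i * a + ((b ^ i - 1) div (b - 1)) * d) [0..<n]"
  shows "sg_type A = n - 1 \<and>
         pseudo_frobenius A = {frobenius A - int k * int d | k. k \<le> n - 2}"
proof -
  have th: "th b n d" using assms by unfold_locales auto
  have "A = map (th.G b n d) [0..<n]"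
    unfolding assms(6) th.G_def[OF th] th.a_def[OF th] th.R_def[OF th] assms(3) ..
  then show ?thesis using th.final[OF th] by simp
qed

end
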